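(* Let $a\geq b>0$, $k\geq 1$ and $t>0$. Then \[ \frac{ka\gamma-b\gamma}{k}+\frac{b}{k}\ln k + \frac{a-b}{t}+a\psi(t)-b\psi_k(t)\geq 0 . \]
   Context: $\gamma$ denotes the Euler–Mascheroni constant and $\psi(t)=\Gamma'(t)/\Gamma(t)$ is the digamma function for $t>0$, where $\Gamma$ is Euler's Gamma function. For $k>0$ and $t>0$, the $k$-Gamma function is $\Gamma_k(t)=\int_0^\infty e^{-x^k/k}x^{t-1}\,dx$, and $\psi_k(t)=\frac{d}{dt}\ln\Gamma_k(t)=\Gamma_k'(t)/\Gamma_k(t)$. *)

theory Defs
  imports "HOL-Analysis.Analysis"
begin

definition Gamma_k :: "real \<Rightarrow> real \<Rightarrow> real" where
  "Gamma_k k t = integral {0<..} (\<lambda>x. exp (- (x powr k) / k) * x powr (t - 1))"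

definition psi_k :: "real \<Rightarrow> real \<Rightarrow> real" where
  "psi_k k t = deriv (\<lambda>s. ln (Gamma_k k s)) t"

end

theory Submission
  imports Defs
begin

lemma Gamma_real_int0:
  fixes s :: real assumes "s > 0"
  shows "((\<lambda>u. u powr (s - 1) / exp u) has_integral Gamma s) {0<..}"
proof -
  have "((\<lambda>u. u powr (s - 1) / exp u) has_integral Gamma s) {0..}"
    by (rule Gamma_integral_real) fact
  hence "((\<lambda>u. if u \<in> {0<..} then u powr (s - 1) / exp u else 0) has_integral Gamma s) {0..}"
    by (rule has_integral_spike [of "{0}", rotated 2]) auto
  also have "?this = ?thesis"
    by (subst has_integral_restrict) auto
  finally show ?thesis .
qed

lemma Gamma_k_eq:
  fixes k t :: real assumes k: "k > 0" and t: "t > 0"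
  shows "Gamma_k k t = k powr (t/k - 1) * Gamma (t/k)"
proof -
  define s where "s = t / k"
  have s: "s > 0" using k t by (simp add: s_def)
  define F where "F = (\<lambda>u::real. k powr (s - 1) * (u powr (s - 1) / exp u))"
  have FI: "(F has_integral k powr (s - 1) * Gamma s) {0<..}"
    unfolding F_def by (intro has_integral_mult_right Gamma_real_int0 s)
  have Fabs: "F absolutely_integrable_on {0<..}"
    using FI by (intro nonnegative_absolutely_integrable_1) (auto simp: F_def has_integral_integrable)
  define g where "g = (\<lambda>x::real. x powr k / k)"
  have der: "(g has_field_derivative x powr (k - 1)) (at x within {0<..})" if "x \<in> {0<..}" for x
  proof -
    have "((\<lambda>x. x powr k / k) has_field_derivative (k * x powr (k - 1)) / k) (at x within {0<..})"
      using that by (auto intro!: derivative_eq_intros)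
    thus ?thesis using k by (simp add: g_def)
  qed
  have inj: "inj_on g {0<..}"
  proof (rule strict_mono_on_imp_inj_on, rule strict_mono_onI)
    fix x y :: real assume "x \<in> {0<..}" "y \<in> {0<..}" "x < y"
    thus "g x < g y" using k unfolding g_def by (intro divide_strict_right_mono powr_less_mono2) auto
  qed
  have img: "g ` {0<..} = {0<..}"
  proof
    show "g ` {0<..} \<subseteq> {0<..}" using k by (auto simp: g_def)
    show "{0<..} \<subseteq> g ` {0<..}"
    proof
      fix u :: real assume u: "u \<in> {0<..}"
      have "g ((k*u) powr (1/k)) = u"
        using k u by (simp add: g_def powr_powr)
      moreover have "(k*u) powr (1/k) \<in> {0<..}" using k u by auto
      ultimately show "u \<in> g ` {0<..}" by (metis image_eqI)
    qed
  qed
  have main: "(\<lambda>x. \<bar>x powr (k - 1)\<bar> * F (g x)) absolutely_integrable_on {0<..} \<and>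
           integral {0<..} (\<lambda>x. \<bar>x powr (k - 1)\<bar> * F (g x)) = k powr (s - 1) * Gamma s"
    using has_absolute_integral_change_of_variables_1'[of "{0<..}" g "\<lambda>x. x powr (k - 1)" F
        "k powr (s - 1) * Gamma s", OF _ der inj] Fabs FI
    by (simp add: img integral_unique)
  have eq: "\<bar>x powr (k - 1)\<bar> * F (g x) = exp (- (x powr k) / k) * x powr (t - 1)"
    if x: "x \<in> {0<..}" for x
  proof -
    have x0: "x > 0" using x by auto
    have "F (g x) = k powr (s - 1) * ((x powr k / k) powr (s - 1)) / exp (x powr k / k)"
      by (simp add: F_def g_def)
    also have "(x powr k / k) powr (s - 1) = (x powr k) powr (s - 1) / k powr (s - 1)"
      using x0 k by (simp add: powr_divide)
    also have "(x powr k) powr (s - 1) = x powr (t - k)"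
    proof -
      have "k * (s - 1) = t - k" using k by (simp add: s_def field_simps)
      thus ?thesis using x0 by (simp add: powr_powr)
    qed
    finally have "F (g x) = x powr (t - k) / exp (x powr k / k)"
      using k by simp
    hence "\<bar>x powr (k - 1)\<bar> * F (g x) = (x powr (k - 1) * x powr (t - k)) / exp (x powr k / k)"
      using x0 by simp
    also have "x powr (k - 1) * x powr (t - k) = x powr (t - 1)"
      using x0 by (simp add: powr_add[symmetric])
    finally show ?thesis by (simp add: exp_minus field_simps)
  qed
  have "Gamma_k k t = integral {0<..} (\<lambda>x. \<bar>x powr (k - 1)\<bar> * F (g x))"
    unfolding Gamma_k_def by (intro integral_cong) (rule eq[symmetric], simp)
  also have "\<dots> = k powr (s - 1) * Gamma s" using main by simp
  finally show ?thesis by (simp add: s_def)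
qed

lemma psi_k_eq:
  fixes k t :: real assumes k: "k > 0" and t: "t > 0"
  shows "psi_k k t = ln k / k + Digamma (t/k) / k"
proof -
  have ev: "\<forall>\<^sub>F s in nhds t. ln (Gamma_k k s) = (s/k - 1) * ln k + ln_Gamma (s/k)"
  proof -
    have "\<forall>\<^sub>F s in nhds t. s \<in> {0<..}" using t by (intro eventually_nhds_in_open) auto
    thus ?thesis
    proof (rule eventually_mono)
      fix s :: real assume "s \<in> {0<..}"
      hence s: "s > 0" by auto
      have g: "Gamma (s/k) > 0" using s k by (intro Gamma_real_pos) auto
      have p: "k powr (s/k - 1) > 0" using k by simp
      have "ln (k powr (s/k - 1) * Gamma (s/k)) = ln (k powr (s/k - 1)) + ln (Gamma (s/k))"
        using p g by (simp add: ln_mult)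
      also have "\<dots> = (s/k - 1) * ln k + ln_Gamma (s/k)"
        using s k by (simp add: ln_powr ln_Gamma_real_pos)
      finally have "ln (k powr (s/k - 1) * Gamma (s/k)) = (s/k - 1) * ln k + ln_Gamma (s/k)" .
      thus "ln (Gamma_k k s) = (s/k - 1) * ln k + ln_Gamma (s/k)"
        using s k by (simp add: Gamma_k_eq)
    qed
  qed
  have d: "((\<lambda>s. (s/k - 1) * ln k + ln_Gamma (s/k)) has_field_derivative
            ln k / k + Digamma (t/k) / k) (at t)"
    using k t by (auto intro!: derivative_eq_intros simp: field_simps)
  have "((\<lambda>s. ln (Gamma_k k s)) has_field_derivative ln k / k + Digamma (t/k) / k) (at t)"
    by (rule DERIV_cong_ev[OF refl ev refl, THEN iffD2, OF d])
  thus ?thesis unfolding psi_k_def by (rule DERIV_imp_deriv)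
qed

theorem lemma3p5:
  fixes a b k t :: real
  assumes "a \<ge> b" "b > 0" "k \<ge> 1" "t > 0"
  shows "(k * a * euler_mascheroni - b * euler_mascheroni) / k + (b / k) * ln k
           + (a - b) / t + a * Digamma t - b * psi_k k t \<ge> 0"
proof -
  have k0: "k > 0" using assms by simp
  define f where "f = (\<lambda>x::real. euler_mascheroni + Digamma (x + 1))"
  have ft: "f t = euler_mascheroni + Digamma t + 1 / t"
    using assms Digamma_plus1[of t] by (simp add: f_def)
  have ftk: "f (t/k) = euler_mascheroni + Digamma (t/k) + k / t"
    using assms k0 Digamma_plus1[of "t/k"] by (simp add: f_def)
  have mono: "f (t/k) \<le> f t"
  proof -
    have tk: "t/k + 1 > 0" using assms k0 by (simp add: add_pos_nonneg)
    have "t/k \<le> t" using assms k0 by (simp add: divide_le_eq)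
    hence "Digamma (t/k + 1) \<le> Digamma (t + 1)" using tk by (intro Digamma_real_mono) auto
    thus ?thesis by (simp add: f_def)
  qed
  have pos: "f (t/k) \<ge> 0"
    using Digamma_real_mono[of 1 "t/k + 1"] assms k0 by (simp add: f_def add_pos_nonneg divide_pos_pos)
  have E: "(k * a * euler_mascheroni - b * euler_mascheroni) / k + (b / k) * ln k
           + (a - b) / t + a * Digamma t - b * psi_k k t = a * f t - (b / k) * f (t/k)"
    using k0 assms by (simp add: psi_k_eq ft ftk field_simps)
  have "(b / k) * f (t/k) \<le> b * f (t/k)"
    using pos assms k0 by (intro mult_right_mono) (auto simp: divide_le_eq)
  also have "\<dots> \<le> b * f t" using mono assms by (intro mult_left_mono) auto
  also have "\<dots> \<le> a * f t" using mono pos assms by (intro mult_right_mono) auto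
  finally show ?thesis using E by simp
qed

end
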